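(* Let $n \ge 3$ and $2 \le k \le n-1$. Let $A$ be a solution of the $k$-out-of-$(n-1)$ puzzle and $B$ a solution of the $(k-1)$-out-of-$(n-1)$ puzzle, both words on the nails $\{1, \dots, n-1\}$. Then the word \[ A + n + B - A - n \] on the nails $\{1,\dots,n\}$ solves the $k$-out-of-$n$ picture-hanging puzzle.
   Context: Words are elements of the free group on the nails, written additively ($+$ group operation, $-$ inverse, $0$ identity); $n$ in the word denotes the generator for nail $n$. For a nail set $V$ and $S \subseteq V$, $w|_S$ is the image of $w$ under the homomorphism killing the generators in $S$. A solution to the $k$-out-of-$m$ picture-hanging puzzle on a set $V$ of $m$ nails is a word $w$ with $w|_S = 0 \iff |S| \ge k$ for all $S \subseteq V$ (equivalently for $k\ge1$: $w \ne 0$, removing any $k$ nails gives $0$, removing fewer leaves it nonzero). *)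

theory Defs
  imports Main
begin

text \<open>Words in the free group on nails (natural numbers): a word is a list of
letters (nail, sign); sign True is the generator, False its inverse.
Group addition is concatenation, negation is formal inversion, and two words
denote the same free-group element iff they are related by the equivalence
closure of cancelling an adjacent pair x, x^-1.\<close>

type_synonym letter = "nat \<times> bool"
type_synonym word = "letter list"

definition gen :: "nat \<Rightarrow> word" where
  "gen n = [(n, True)]"

definition winv :: "word \<Rightarrow> word" where
  "winv w = rev (map (\<lambda>(a, b). (a, \<not> b)) w)"

inductive cancel1 :: "word \<Rightarrow> word \<Rightarrow> bool" where
  "cancel1 (xs @ [(a, b), (a, \<not> b)] @ ys) (xs @ ys)"

definition free_eq :: "word \<Rightarrow> word \<Rightarrow> bool" where
  "free_eq = equivclp cancel1"

definition is_zero :: "word \<Rightarrow> bool" where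
  "is_zero w \<longleftrightarrow> free_eq w []"

text \<open>w|_S : image under the homomorphism killing the generators in S.\<close>
definition remove_nails :: "nat set \<Rightarrow> word \<Rightarrow> word" where
  "remove_nails S w = filter (\<lambda>x. fst x \<notin> S) w"

definition nails_of :: "word \<Rightarrow> nat set" where
  "nails_of w = fst ` set w"

definition puzzle_solution :: "nat \<Rightarrow> nat set \<Rightarrow> word \<Rightarrow> bool" where
  "puzzle_solution k V w \<longleftrightarrow> nails_of w \<subseteq> V \<and>
     (\<forall>S. S \<subseteq> V \<longrightarrow> (is_zero (remove_nails S w) \<longleftrightarrow> card S \<ge> k))"

end

theory Submission
  imports Defs
begin

definition ilet :: "letter \<Rightarrow> letter" where
  "ilet x = (fst x, \<not> snd x)"

fun step :: "letter \<Rightarrow> word \<Rightarrow> word" where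
  "step x [] = [x]"
| "step x (y # r) = (if y = ilet x then r else x # y # r)"

definition act :: "word \<Rightarrow> word \<Rightarrow> word" where
  "act w r = foldr step w r"

definition red :: "word \<Rightarrow> word" where
  "red w = act w []"

fun reduced :: "word \<Rightarrow> bool" where
  "reduced [] = True"
| "reduced [x] = True"
| "reduced (x # y # r) = (y \<noteq> ilet x \<and> reduced (y # r))"

lemma reduced_tl: "reduced (y # r) \<Longrightarrow> reduced r"
  by (cases r) auto

lemma ilet_ilet[simp]: "ilet (ilet x) = x"
  by (cases x) (simp add: ilet_def)

lemma reduced_step: "reduced r \<Longrightarrow> reduced (step x r)"
  by (cases r) (auto dest: reduced_tl)

lemma step_cancel: "reduced r \<Longrightarrow> step x (step (ilet x) r) = r"
proof (cases r)
  case Nil then show ?thesis by simp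
next
  case (Cons y r')
  assume red: "reduced r"
  show ?thesis
  proof (cases "y = x")
    case True
    then show ?thesis using Cons red
      by (cases r') (auto simp: ilet_def)
  next
    case False
    then show ?thesis using Cons by (auto simp: ilet_def)
  qed
qed

lemma act_append: "act (u @ v) r = act u (act v r)"
  by (simp add: act_def)

lemma act_Nil[simp]: "act [] r = r" by (simp add: act_def)
lemma act_Cons[simp]: "act (x # u) r = step x (act u r)" by (simp add: act_def)

lemma reduced_act: "reduced r \<Longrightarrow> reduced (act w r)"
  by (induction w) (auto intro: reduced_step)

lemma cancel_act: "cancel1 u v \<Longrightarrow> reduced r \<Longrightarrow> act u r = act v r"
proof (induction rule: cancel1.induct)
  case (1 xs a b ys)
  have "step (a, b) (step (a, \<not> b) (act ys r)) = act ys r"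
    using step_cancel[OF reduced_act[OF 1], of "(a,b)"] by (simp add: ilet_def)
  then show ?case by (simp add: act_append)
qed

lemma freeeq_act: "free_eq u v \<Longrightarrow> reduced r \<Longrightarrow> act u r = act v r"
  unfolding free_eq_def
proof (induction rule: equivclp_induct)
  case base then show ?case by simp
next
  case (step y z)
  then show ?case using cancel_act by metis
qed

lemma cancel1_Cons: "cancel1 u v \<Longrightarrow> cancel1 (x # u) (x # v)"
proof (induction rule: cancel1.induct)
  case (1 xs a b ys)
  show ?case using cancel1.intros[of "x # xs" a b ys] by simp
qed

lemma freeeq_Cons: "free_eq u v \<Longrightarrow> free_eq (x # u) (x # v)"
  unfolding free_eq_def
proof (induction rule: equivclp_induct)
  case base then show ?case by simp
next
  case (step y z)
  then show ?case
    by (meson cancel1_Cons equivclp_into_equivclp)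
qed

lemma freeeq_step: "free_eq (x # r) (step x r)"
proof (cases r)
  case Nil then show ?thesis by (simp add: free_eq_def)
next
  case (Cons y r')
  show ?thesis
  proof (cases "y = ilet x")
    case True
    obtain a b where x: "x = (a, b)" by (cases x)
    have "cancel1 ([] @ [(a, b), (a, \<not> b)] @ r') ([] @ r')" by (rule cancel1.intros)
    then show ?thesis using True Cons x
      by (auto simp: free_eq_def ilet_def)
  next
    case False then show ?thesis using Cons by (simp add: free_eq_def)
  qed
qed

lemma freeeq_red: "free_eq w (red w)"
proof (induction w)
  case Nil then show ?case by (simp add: free_eq_def red_def)
next
  case (Cons x w)
  have "free_eq (x # w) (x # red w)" using freeeq_Cons[OF Cons] .
  moreover have "free_eq (x # red w) (step x (red w))" by (rule freeeq_step)
  ultimately show ?case unfolding free_eq_def red_def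
    by (metis act_Cons equivclp_trans)
qed

lemma is_zero_red: "is_zero w \<longleftrightarrow> red w = []"
proof
  assume "is_zero w"
  then have "act w [] = act [] []"
    using freeeq_act[of w "[]" "[]"] by (simp add: is_zero_def)
  then show "red w = []" by (simp add: red_def)
next
  assume "red w = []"
  then show "is_zero w" using freeeq_red[of w] by (simp add: is_zero_def)
qed

lemma red_eq_act: "red u = red u' \<Longrightarrow> reduced r \<Longrightarrow> act u r = act u' r"
proof -
  assume "red u = red u'" "reduced r"
  have "free_eq u u'"
    using freeeq_red[of u] freeeq_red[of u'] \<open>red u = red u'\<close>
    unfolding free_eq_def by (metis equivclp_sym equivclp_trans)
  then show ?thesis using freeeq_act \<open>reduced r\<close> by blast
qed

lemma red_app: "red (u @ v) = act u (red v)"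
  by (simp add: red_def act_append)

lemma reduced_red: "reduced (red w)"
  by (simp add: red_def reduced_act)

lemma red_cong: "red u = red u' \<Longrightarrow> red v = red v' \<Longrightarrow> red (u @ v) = red (u' @ v')"
  by (metis red_app red_eq_act reduced_red)

lemma winv_Cons: "winv (x # u) = winv u @ [ilet x]"
  by (cases x) (simp add: winv_def ilet_def)

lemma act_winv: "reduced r \<Longrightarrow> act (u @ winv u) r = r"
proof (induction u arbitrary: r)
  case Nil then show ?case by (simp add: winv_def)
next
  case (Cons x u)
  have "act (x # u @ winv (x # u)) r = step x (act (u @ winv u) (step (ilet x) r))"
    by (simp add: winv_Cons act_append)
  also have "\<dots> = r" using Cons reduced_step step_cancel by simp
  finally show ?case by simp
qed

lemma winv_winv[simp]: "winv (winv u) = u"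
  by (induction u) (auto simp: winv_def)

lemma red_winv1: "red (u @ winv u) = []"
  by (simp add: red_def act_winv)

lemma red_winv2: "red (winv u @ u) = []"
  using red_winv1[of "winv u"] by simp

lemma nails_step: "nails_of (step x r) \<subseteq> insert (fst x) (nails_of r)"
  by (cases r) (auto simp: nails_of_def)

lemma nails_act: "nails_of (act w r) \<subseteq> nails_of w \<union> nails_of r"
proof (induction w)
  case Nil then show ?case by simp
next
  case (Cons x w)
  have "nails_of (x # w) = insert (fst x) (nails_of w)" by (simp add: nails_of_def)
  then show ?case using nails_step[of x "act w r"] Cons.IH by auto
qed

lemma nails_red: "nails_of (red w) \<subseteq> nails_of w"
  using nails_act[of w "[]"] by (simp add: red_def nails_of_def)

lemma step_app: "fst y \<noteq> fst x \<Longrightarrow> step y (s @ x # r) = step y s @ x # r"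
  by (cases s) (auto simp: ilet_def)

lemma act_sep: "fst x \<notin> nails_of w \<Longrightarrow> act w (x # r) = red w @ x # r"
proof (induction w)
  case Nil then show ?case by (simp add: red_def)
next
  case (Cons y w)
  then have "fst y \<noteq> fst x" "fst x \<notin> nails_of w" by (auto simp: nails_of_def)
  then show ?case using Cons step_app by (simp add: red_def)
qed

lemma nails_app: "nails_of (u @ v) = nails_of u \<union> nails_of v"
  by (auto simp: nails_of_def)

lemma nails_winv: "nails_of (winv w) = nails_of w"
  by (induction w) (auto simp: winv_Cons nails_app, auto simp: nails_of_def ilet_def winv_def)

lemma key_nonzero:
  assumes "n \<notin> nails_of a" "n \<notin> nails_of c" "red a \<noteq> []"
  shows "red (a @ [(n, True)] @ c @ winv a @ [(n, False)]) \<noteq> []"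
proof -
  define d where "d = red (c @ winv a)"
  have nd: "n \<notin> nails_of d" using nails_red[of "c @ winv a"] assms
    by (auto simp: d_def nails_app nails_winv)
  have "act (c @ winv a) [(n, False)] = d @ [(n, False)]"
    using act_sep[of "(n, False)" "c @ winv a" "[]"] assms
    by (simp add: d_def nails_app nails_winv)
  then have e: "red (a @ [(n, True)] @ c @ winv a @ [(n, False)]) = act a (step (n, True) (d @ [(n, False)]))"
    by (simp add: red_def act_append)
  show ?thesis
  proof (cases d)
    case Nil
    then show ?thesis using e assms by (simp add: ilet_def red_def)
  next
    case (Cons z d')
    then have "fst z \<noteq> n" using nd by (auto simp: nails_of_def)
    then have "step (n, True) (d @ [(n, False)]) = (n, True) # d @ [(n, False)]"
      using Cons by (auto simp: ilet_def)
    then show ?thesis using e act_sep[of "(n, True)" a] assms by simp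
  qed
qed

lemma remove_app: "remove_nails S (u @ v) = remove_nails S u @ remove_nails S v"
  by (simp add: remove_nails_def)

lemma remove_winv: "remove_nails S (winv u) = winv (remove_nails S u)"
  by (induction u) (auto simp: remove_nails_def winv_Cons ilet_def, simp add: winv_def)

lemma remove_restrict: "nails_of w \<subseteq> V \<Longrightarrow> remove_nails S w = remove_nails (S \<inter> V) w"
  unfolding remove_nails_def nails_of_def by (rule filter_cong) auto

lemma red_Nil[simp]: "red [] = []" by (simp add: red_def)

lemma red_winv_zero: "red u = [] \<Longrightarrow> red (winv u) = []"
proof -
  assume h: "red u = []"
  have "red (winv u @ u) = red (winv u @ [])"
    using red_cong[of "winv u" "winv u" u "[]"] h by simp
  then show ?thesis using red_winv2[of u] by simp
qed

lemma conj_zero: "red (a @ b @ winv a) = [] \<longleftrightarrow> red b = []"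
proof
  assume "red b = []"
  then have "red (b @ winv a) = red ([] @ winv a)"
    using red_cong[of b "[]" "winv a" "winv a"] by simp
  then have "red (a @ b @ winv a) = red (a @ [] @ winv a)"
    using red_cong[of a a "b @ winv a" "[] @ winv a"] by simp
  then show "red (a @ b @ winv a) = []" using red_winv1 by simp
next
  assume h: "red (a @ b @ winv a) = []"
  have "red ((a @ b @ winv a) @ a) = red ([] @ a)"
    using red_cong[of "a @ b @ winv a" "[]" a a] h by simp
  then have "red (winv a @ (a @ b @ winv a) @ a) = red (winv a @ [] @ a)"
    using red_cong[of "winv a" "winv a" "(a @ b @ winv a) @ a" "[] @ a"] by simp
  then have 1: "red ((winv a @ a) @ b @ (winv a @ a)) = []" using red_winv2[of a] by simp
  have 2: "red (b @ (winv a @ a)) = red (b @ [])"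
    using red_cong[of b b "winv a @ a" "[]"] red_winv2[of a] by simp
  have "red ((winv a @ a) @ b @ (winv a @ a)) = red ([] @ b @ [])"
    using red_cong[of "winv a @ a" "[]" "b @ (winv a @ a)" "b @ []"] red_winv2[of a] 2 by simp
  with 1 show "red b = []" by simp
qed

lemma restr_lemma: "S \<subseteq> {1..(n::nat)} \<Longrightarrow> S \<inter> {1..n-1} = S - {n}"
proof (intro equalityI subsetI)
  fix x assume "S \<subseteq> {1..n}" "x \<in> S - {n}"
  then have "x \<in> {1..n}" "x \<noteq> n" "x \<in> S" by auto
  then show "x \<in> S \<inter> {1..n-1}" by auto
qed auto

theorem proposition4:
  fixes n k :: nat and A B :: word
  assumes "n \<ge> 3" and "2 \<le> k" and "k \<le> n - 1"
    and "puzzle_solution k {1..n-1} A"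
    and "puzzle_solution (k - 1) {1..n-1} B"
  shows "puzzle_solution k {1..n} (A @ gen n @ B @ winv A @ winv (gen n))"
proof -
  have nA: "nails_of A \<subseteq> {1..n-1}" and zA: "\<And>S. S \<subseteq> {1..n-1} \<Longrightarrow> red (remove_nails S A) = [] \<longleftrightarrow> card S \<ge> k"
    using assms(4) by (auto simp: puzzle_solution_def is_zero_red)
  have nB: "nails_of B \<subseteq> {1..n-1}" and zB: "\<And>S. S \<subseteq> {1..n-1} \<Longrightarrow> red (remove_nails S B) = [] \<longleftrightarrow> card S \<ge> k - 1"
    using assms(5) by (auto simp: puzzle_solution_def is_zero_red)
  have sub: "{1..n-1} \<subseteq> {1..n}" by auto
  have "nails_of (A @ gen n @ B @ winv A @ winv (gen n)) \<subseteq> {1..n}"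
  proof -
    have "nails_of (gen n) = {n}" by (simp add: gen_def nails_of_def)
    moreover have "nails_of A \<subseteq> {1..n}" using nA sub by (rule order_trans)
    moreover have "nails_of B \<subseteq> {1..n}" using nB sub by (rule order_trans)
    moreover have "n \<in> {1..n}" using assms(1) by simp
    ultimately show ?thesis by (simp add: nails_app nails_winv)
  qed
  moreover have "red (remove_nails S (A @ gen n @ B @ winv A @ winv (gen n))) = [] \<longleftrightarrow> card S \<ge> k"
    if S: "S \<subseteq> {1..n}" for S
  proof -
    define T where "T = S \<inter> {1..n-1}"
    have T: "T \<subseteq> {1..n-1}" by (simp add: T_def)
    define a where "a = remove_nails S A"
    define b where "b = remove_nails S B"
    have a: "a = remove_nails T A" using remove_restrict[OF nA] by (simp add: a_def T_def)
    have b: "b = remove_nails T B" using remove_restrict[OF nB] by (simp add: b_def T_def)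
    have nn: "n \<notin> {1..n-1}" using assms(1) by simp
    have "nails_of a \<subseteq> nails_of A" by (auto simp: a_def remove_nails_def nails_of_def)
    then have na: "n \<notin> nails_of a" using nA nn by blast
    have "nails_of b \<subseteq> nails_of B" by (auto simp: b_def remove_nails_def nails_of_def)
    then have nb: "n \<notin> nails_of b" using nB nn by blast
    have W: "remove_nails S (A @ gen n @ B @ winv A @ winv (gen n)) =
       a @ remove_nails S (gen n) @ b @ winv a @ winv (remove_nails S (gen n))"
      by (simp add: remove_app remove_winv a_def b_def)
    have fS: "finite S" using S finite_subset by blast
    show ?thesis
    proof (cases "n \<in> S")
      case True
      have TS: "T = S - {n}" using restr_lemma[OF S] unfolding T_def .
      have cS: "card S = card T + 1" using TS True fS
        by (metis card_Suc_Diff1 Suc_eq_plus1)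
      have "remove_nails S (gen n) = []" using True by (simp add: remove_nails_def gen_def)
      then have "red (remove_nails S (A @ gen n @ B @ winv A @ winv (gen n))) = [] \<longleftrightarrow> red b = []"
        using W conj_zero by (simp add: winv_def)
      also have "\<dots> \<longleftrightarrow> card T \<ge> k - 1" using zB[OF T] b by simp
      also have "\<dots> \<longleftrightarrow> card S \<ge> k" using cS assms(2) by arith
      finally show ?thesis .
    next
      case False
      have TS: "T = S" using restr_lemma[OF S] False unfolding T_def by simp
      have g: "remove_nails S (gen n) = [(n, True)]" "winv [(n, True)] = [(n, False)]"
        using False by (simp_all add: remove_nails_def gen_def winv_def)
      show ?thesis
      proof (cases "card S \<ge> k")
        case True
        have ra: "red a = []" using zA[OF T] a TS True by simp
        have rb: "red b = []" using zB[OF T] b TS True by simp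
        have ra': "red (winv a) = []" using red_winv_zero[OF ra] .
        have r0: "red ([] :: word) = []" by (simp add: red_def)
        have e1: "red (winv a @ [(n, False)]) = red ([] @ [(n, False)])"
          using red_cong[of "winv a" "[]" "[(n, False)]" "[(n, False)]"] ra' r0 by simp
        have e2: "red (b @ winv a @ [(n, False)]) = red ([] @ [(n, False)])"
          using red_cong[of b "[]" "winv a @ [(n, False)]" "[(n, False)]"] rb r0 e1 by simp
        have e3: "red ([(n, True)] @ b @ winv a @ [(n, False)]) = red ([(n, True)] @ [(n, False)])"
          using red_cong[of "[(n, True)]" "[(n, True)]" "b @ winv a @ [(n, False)]" "[(n, False)]"] e2 by simp
        have "red (a @ [(n, True)] @ b @ winv a @ [(n, False)]) = red ([] @ [(n, True)] @ [(n, False)])"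
          using red_cong[of a "[]" "[(n, True)] @ b @ winv a @ [(n, False)]" "[(n, True)] @ [(n, False)]"] ra r0 e3 by simp
        also have "\<dots> = []" by (simp add: red_def ilet_def)
        finally show ?thesis using W g True by simp
      next
        case False
        have ra: "red a \<noteq> []" using zA[OF T] a TS False by simp
        show ?thesis using key_nonzero[OF na nb ra] W g False by simp
      qed
    qed
  qed
  ultimately show ?thesis using sub by (auto simp: puzzle_solution_def is_zero_red)
qed

end
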